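(* Let $B$ be a Borel ideal of $S=k[x_1,\dots,x_n]$ and let $m$ be a monomial which is a $p$-socle for $B$. Assume that for every variable $x_q$ dividing $m$, neither $m\frac{x_{q+1}}{x_q}$ (when $q<n$) nor $\frac{m}{x_q}$ is a $p$-socle for $B$. Then $mx_p\in\mathrm{Bgens}(B)$.
   Context: A Borel ideal is a monomial ideal closed under Borel moves $m\mapsto m\frac{x_{i_1}}{x_{j_1}}\cdots\frac{x_{i_s}}{x_{j_s}}$ ($i_t<j_t$, all $x_{j_t}\mid m$). $\mathrm{Bgens}(B)$ is the unique minimal set $T$ of monomials with $B$ equal to the smallest Borel ideal containing $T$. A monomial $m$ is a $p$-socle for $B$ if $\operatorname{Ann}_{S/B}(m)=(B:m)=(x_1,\dots,x_p)$. *)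

theory Defs
  imports Main "HOL-Library.Function_Algebras"
begin

text \<open>Monomials of S = k[x_1,...,x_n] are represented by exponent vectors
  a :: nat \<Rightarrow> nat supported on {1..n}; multiplication is addition,
  divisibility is the pointwise order. A monomial ideal is represented by
  its set of monomials.\<close>

type_synonym monom = "nat \<Rightarrow> nat"

definition mono :: "nat \<Rightarrow> monom set" where
  "mono n = {a. \<forall>k. a k \<noteq> 0 \<longrightarrow> k \<in> {1..n}}"

definition var :: "nat \<Rightarrow> monom" where
  "var i = (\<lambda>k. if k = i then 1 else 0)"

definition monomial_ideal :: "nat \<Rightarrow> monom set \<Rightarrow> bool" where
  "monomial_ideal n I \<longleftrightarrow> I \<subseteq> mono n \<and>
     (\<forall>a\<in>I. \<forall>b\<in>mono n. a \<le> b \<longrightarrow> b \<in> I)"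

text \<open>A Borel move m \<mapsto> m (x_{i_1}/x_{j_1}) ... (x_{i_s}/x_{j_s}) given by the
  list of pairs (i_t, j_t); admissible if i_t < j_t and x_{j_1}...x_{j_s} divides m.\<close>

definition admissible_move :: "nat \<Rightarrow> monom \<Rightarrow> (nat \<times> nat) list \<Rightarrow> bool" where
  "admissible_move n m ps \<longleftrightarrow>
     (\<forall>(i, j) \<in> set ps. 1 \<le> i \<and> i < j \<and> j \<le> n) \<and>
     (\<Sum>(i, j)\<leftarrow>ps. var j) \<le> m"

definition borel_move :: "monom \<Rightarrow> (nat \<times> nat) list \<Rightarrow> monom" where
  "borel_move m ps = m + (\<Sum>(i, j)\<leftarrow>ps. var i) - (\<Sum>(i, j)\<leftarrow>ps. var j)"

definition borel_ideal :: "nat \<Rightarrow> monom set \<Rightarrow> bool" where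
  "borel_ideal n B \<longleftrightarrow> monomial_ideal n B \<and>
     (\<forall>m\<in>B. \<forall>ps. admissible_move n m ps \<longrightarrow> borel_move m ps \<in> B)"

definition borel_gen :: "nat \<Rightarrow> monom set \<Rightarrow> monom set" where
  "borel_gen n T = \<Inter>{B. borel_ideal n B \<and> T \<subseteq> B}"

definition Bgens :: "nat \<Rightarrow> monom set \<Rightarrow> monom set" where
  "Bgens n B = (THE T. borel_gen n T = B \<and> (\<forall>T'. T' \<subset> T \<longrightarrow> borel_gen n T' \<noteq> B))"

text \<open>(B : m) = (x_1, ..., x_p), compared as monomial ideals (sets of monomials).\<close>
definition p_socle :: "nat \<Rightarrow> monom set \<Rightarrow> nat \<Rightarrow> monom \<Rightarrow> bool" where
  "p_socle n B p m \<longleftrightarrow> m \<in> mono n \<and>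
     {u \<in> mono n. u + m \<in> B} = {u \<in> mono n. \<exists>i\<in>{1..p}. 0 < u i}"

end

theory Submission
  imports Defs
begin

lemma sum_list_fun_apply: "(sum_list (map f xs) :: monom) k = sum_list (map (\<lambda>x. f x k) xs)"
  by (induction xs) auto

definition wt :: "nat \<Rightarrow> monom \<Rightarrow> nat" where
  "wt n f = (\<Sum>k\<in>{1..n}. (Suc n - k) * f k)"

lemma wt_add: "wt n (f + g) = wt n f + wt n g"
  by (simp add: wt_def sum.distrib algebra_simps)

lemma wt_zero: "wt n 0 = 0"
  by (simp add: wt_def)

lemma wt_var: "1 \<le> i \<Longrightarrow> i \<le> n \<Longrightarrow> wt n (var i) = Suc n - i"
proof -
  assume "1 \<le> i" "i \<le> n"
  have "wt n (var i) = (\<Sum>k\<in>{1..n}. if k = i then Suc n - i else 0)"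
    unfolding wt_def var_def by (rule sum.cong) auto
  also have "\<dots> = Suc n - i" using \<open>1 \<le> i\<close> \<open>i \<le> n\<close> by (simp add: sum.delta)
  finally show ?thesis .
qed

lemma wt_sum_list: "wt n (sum_list (map f xs)) = sum_list (map (\<lambda>x. wt n (f x)) xs)"
  by (induction xs) (simp_all only: list.map sum_list.Cons sum_list.Nil wt_zero wt_add)

lemma wt_pairs:
  assumes "\<forall>(i, j) \<in> set ps. 1 \<le> i \<and> i < j \<and> j \<le> n" "ps \<noteq> []"
  shows "wt n (\<Sum>(i, j)\<leftarrow>ps. var j) < wt n (\<Sum>(i, j)\<leftarrow>ps. var i)"
  using assms
proof (induction ps)
  case Nil then show ?case by simp
next
  case (Cons x ps)
  obtain i j where x: "x = (i, j)" by force
  with Cons.prems have ij: "1 \<le> i" "i < j" "j \<le> n" by auto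
  have le: "wt n (\<Sum>(i, j)\<leftarrow>ps. var j) \<le> wt n (\<Sum>(i, j)\<leftarrow>ps. var i)"
  proof (cases "ps = []")
    case True then show ?thesis by simp
  next
    case False then show ?thesis using Cons by auto
  qed
  have e1: "wt n (\<Sum>(i, j)\<leftarrow>(x#ps). var i) = (Suc n - i) + wt n (\<Sum>(i, j)\<leftarrow>ps. var i)"
    unfolding x by (simp only: list.map sum_list.Cons prod.case wt_add wt_var[OF ij(1)] ij(2,3)) (use ij wt_var in simp)
  have e2: "wt n (\<Sum>(i, j)\<leftarrow>(x#ps). var j) = (Suc n - j) + wt n (\<Sum>(i, j)\<leftarrow>ps. var j)"
    unfolding x by (simp only: list.map sum_list.Cons prod.case wt_add) (use ij wt_var[of j n] in simp)
  show ?case unfolding e1 e2 using le ij by linarith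
qed

lemma wt_less:
  assumes "a \<le> b" "a \<noteq> b" "b \<in> mono n"
  shows "wt n a < wt n b"
proof -
  obtain k where k: "a k \<noteq> b k" using assms(2) by auto
  with assms(1) have lt: "a k < b k" by (metis le_funD order_le_neq_trans)
  hence "b k \<noteq> 0" by simp
  with assms(3) have "k \<in> {1..n}" by (auto simp: mono_def)
  show ?thesis unfolding wt_def
    apply (rule sum_strict_mono_ex1)
    using assms(1) lt \<open>k \<in> {1..n}\<close> by (auto simp: le_fun_def)
qed

lemma wt_move:
  assumes "admissible_move n a ps" "borel_move a ps \<noteq> a"
  shows "wt n a < wt n (borel_move a ps)"
proof -
  let ?I = "(\<Sum>(i, j)\<leftarrow>ps. var i) :: monom"
  let ?J = "(\<Sum>(i, j)\<leftarrow>ps. var j) :: monom"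
  have J: "?J \<le> a" and rng: "\<forall>(i, j) \<in> set ps. 1 \<le> i \<and> i < j \<and> j \<le> n"
    using assms(1) by (auto simp: admissible_move_def)
  have ne: "ps \<noteq> []" using assms(2) by (auto simp: borel_move_def)
  have eq: "borel_move a ps + ?J = a + ?I"
  proof (rule ext)
    fix k have "?J k \<le> a k" using J by (simp add: le_fun_def)
    then show "(borel_move a ps + ?J) k = (a + ?I) k" by (simp add: borel_move_def)
  qed
  have "wt n (borel_move a ps) + wt n ?J = wt n a + wt n ?I"
    using arg_cong[OF eq, of "wt n"] by (simp add: wt_add)
  with wt_pairs[OF rng ne] show ?thesis by linarith
qed

definition G :: "nat \<Rightarrow> monom set \<Rightarrow> monom set" where
  "G n B = {g \<in> B. borel_ideal n (B - {g})}"

lemma sub_borel_gen: "T \<subseteq> borel_gen n T"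
  unfolding borel_gen_def by blast

lemma G_in_gen:
  assumes "borel_gen n T = B" "g \<in> G n B"
  shows "g \<in> T"
proof (rule ccontr)
  assume "g \<notin> T"
  have "T \<subseteq> B - {g}" using sub_borel_gen[of T n] assms \<open>g \<notin> T\<close> by auto
  moreover have "borel_ideal n (B - {g})" using assms(2) by (simp add: G_def)
  ultimately have "borel_gen n T \<subseteq> B - {g}" unfolding borel_gen_def by blast
  with assms show False by (auto simp: G_def)
qed

lemma G_gen:
  assumes "borel_ideal n B"
  shows "borel_gen n (G n B) = B"
proof
  show "borel_gen n (G n B) \<subseteq> B" unfolding borel_gen_def G_def using assms by blast
next
  show "B \<subseteq> borel_gen n (G n B)"
    unfolding borel_gen_def
  proof (rule Inter_greatest)
    fix C assume "C \<in> {C. borel_ideal n C \<and> G n B \<subseteq> C}"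
    hence C: "borel_ideal n C" "G n B \<subseteq> C" by auto
    have "\<forall>b. b \<in> B \<longrightarrow> b \<in> C"
    proof (intro allI)
      fix b show "b \<in> B \<longrightarrow> b \<in> C"
      proof (induction b rule: measure_induct_rule[where f = "wt n"])
        case (less b)
        show ?case
        proof
          assume bB: "b \<in> B"
          show "b \<in> C"
          proof (cases "b \<in> G n B")
            case True then show ?thesis using C by auto
          next
            case False
            hence nb: "\<not> borel_ideal n (B - {b})" using bB by (auto simp: G_def)
            have Bm: "B \<subseteq> mono n" using assms by (auto simp: borel_ideal_def monomial_ideal_def)
            have bm: "b \<in> mono n" using Bm bB by auto
            show ?thesis
            proof (cases "\<forall>a\<in>B - {b}. \<forall>c\<in>mono n. a \<le> c \<longrightarrow> c \<in> B - {b}")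
              case True
              with nb Bm obtain a ps where a: "a \<in> B - {b}" "admissible_move n a ps"
                "borel_move a ps \<notin> B - {b}"
                unfolding borel_ideal_def monomial_ideal_def by blast
              hence ab: "borel_move a ps = b" using assms a unfolding borel_ideal_def by blast
              hence "wt n a < wt n b" using wt_move[OF a(2)] a(1) by auto
              with less a have "a \<in> C" by auto
              with C(1) a(2) ab show ?thesis unfolding borel_ideal_def by blast
            next
              case False
              then obtain a c where a: "a \<in> B - {b}" "c \<in> mono n" "a \<le> c" "c \<notin> B - {b}" by blast
              have "c \<in> B" using assms a unfolding borel_ideal_def monomial_ideal_def by blast
              hence "c = b" using a by auto
              hence "wt n a < wt n b" using wt_less[of a b n] a bm by auto
              with less a have "a \<in> C" by auto
              with C(1) a \<open>c = b\<close> bm show ?thesis unfolding borel_ideal_def monomial_ideal_def by blast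
            qed
          qed
        qed
      qed
    qed
    then show "B \<subseteq> C" by auto
  qed
qed

lemma Bgens_eq:
  assumes "borel_ideal n B"
  shows "Bgens n B = G n B"
  unfolding Bgens_def
proof (rule the_equality)
  show "borel_gen n (G n B) = B \<and> (\<forall>T'. T' \<subset> G n B \<longrightarrow> borel_gen n T' \<noteq> B)"
    using G_gen[OF assms] G_in_gen by blast
next
  fix T assume T: "borel_gen n T = B \<and> (\<forall>T'. T' \<subset> T \<longrightarrow> borel_gen n T' \<noteq> B)"
  hence "G n B \<subseteq> T" using G_in_gen by blast
  with T G_gen[OF assms] show "T = G n B" by blast
qed

lemma mono_add: "f \<in> mono n \<Longrightarrow> g \<in> mono n \<Longrightarrow> f + g \<in> mono n"
  by (auto simp: mono_def)
lemma mono_var: "1 \<le> i \<Longrightarrow> i \<le> n \<Longrightarrow> var i \<in> mono n"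
  by (auto simp: mono_def var_def)
lemma mono_diff: "f \<in> mono n \<Longrightarrow> f - g \<in> mono n"
  by (auto simp: mono_def)

lemma up_closed: "borel_ideal n B \<Longrightarrow> x \<in> B \<Longrightarrow> y \<in> mono n \<Longrightarrow> x \<le> y \<Longrightarrow> y \<in> B"
  by (auto simp: borel_ideal_def monomial_ideal_def)

lemma move_closed: "borel_ideal n B \<Longrightarrow> x \<in> B \<Longrightarrow> admissible_move n x ps \<Longrightarrow> borel_move x ps \<in> B"
  by (auto simp: borel_ideal_def)

lemma B_mono: "borel_ideal n B \<Longrightarrow> x \<in> B \<Longrightarrow> x \<in> mono n"
  by (auto simp: borel_ideal_def monomial_ideal_def)

lemma socle_iff: "p_socle n B p m \<Longrightarrow> u \<in> mono n \<Longrightarrow> (u + m \<in> B) = (\<exists>i\<in>{1..p}. 0 < u i)"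
  unfolding p_socle_def by blast

lemma socle_from:
  assumes B: "borel_ideal n B" and p: "1 \<le> p" "p \<le> n" and s: "p_socle n B p m"
    and m': "m' \<in> mono n" "m' + var p \<in> B"
    and imp: "\<forall>u\<in>mono n. u + m' \<in> B \<longrightarrow> u + m \<in> B"
  shows "p_socle n B p m'"
  unfolding p_socle_def
proof (intro conjI m'(1) set_eqI iffI)
  fix u assume "u \<in> {u \<in> mono n. u + m' \<in> B}"
  then show "u \<in> {u \<in> mono n. \<exists>i\<in>{1..p}. 0 < u i}" using imp socle_iff[OF s] by auto
next
  fix u assume "u \<in> {u \<in> mono n. \<exists>i\<in>{1..p}. 0 < u i}"
  then obtain i where u: "u \<in> mono n" "i \<in> {1..p}" "0 < u i" by auto
  have vi: "var i + m' \<in> B"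
  proof (cases "i = p")
    case True then show ?thesis using m' by (simp add: add.commute)
  next
    case False
    hence ip: "i < p" using u by auto
    have adm: "admissible_move n (m' + var p) [(i, p)]"
      using u ip p by (auto simp: admissible_move_def le_fun_def)
    have "borel_move (m' + var p) [(i, p)] = var i + m'"
      by (rule ext) (auto simp: borel_move_def var_def)
    with move_closed[OF B m'(2) adm] show ?thesis by simp
  qed
  have "var i + m' \<le> u + m'" using u by (auto simp: le_fun_def var_def)
  then have "u + m' \<in> B" using up_closed[OF B vi] mono_add[OF u(1) m'(1)] by blast
  with u show "u \<in> {u \<in> mono n. u + m' \<in> B}" by auto
qed

lemma var_le_sum: "(i, j) \<in> set ps \<Longrightarrow> var i \<le> ((\<Sum>(i, j)\<leftarrow>ps. var i) :: monom)"
proof (induction ps)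
  case Nil then show ?case by simp
next
  case (Cons x ps)
  then show ?case
    by (cases x) (auto simp: le_fun_def intro: add_increasing add_increasing2)
qed

lemma sum_remove1:
  "x \<in> set ps \<Longrightarrow> ((\<Sum>(i, j)\<leftarrow>ps. f i j) :: monom) = (case x of (i, j) \<Rightarrow> f i j) + (\<Sum>(i, j)\<leftarrow>remove1 x ps. f i j)"
  by (rule sum_list_map_remove1)


theorem lemma3p5:
  fixes n p :: nat and B :: "monom set" and m :: monom
  assumes "borel_ideal n B"
    and "1 \<le> p" and "p \<le> n"
    and "p_socle n B p m"
    and "\<forall>q\<in>{1..n}. 0 < m q \<longrightarrow>
           (q < n \<longrightarrow> \<not> p_socle n B p (m + var (q + 1) - var q)) \<and>
           \<not> p_socle n B p (m - var q)"
  shows "m + var p \<in> Bgens n B"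
proof -
  note B = assms(1) and p = assms(2,3) and s = assms(4) and hyp = assms(5)
  define a where "a = m + var p"
  have mm: "m \<in> mono n" using s by (simp add: p_socle_def)
  have vp: "var p \<in> mono n" using mono_var[OF p] .
  have am: "a \<in> mono n" unfolding a_def using mono_add[OF mm vp] .
  have aB: "a \<in> B" using socle_iff[OF s vp] p unfolding a_def
    by (auto simp: var_def add.commute)
  have mB: "m \<notin> B" using socle_iff[OF s, of 0] by (auto simp: mono_def)
  have ap: "a p = m p + 1" unfolding a_def by (simp add: var_def)
  have nodiv: "a - var q \<notin> B" if q: "0 < a q" for q
  proof
    assume d: "a - var q \<in> B"
    have qn: "q \<in> {1..n}" using am q by (auto simp: mono_def)
    show False
    proof (cases "q = p")
      case True
      have "a - var q = m" using True ap by (auto simp: a_def var_def)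
      with d mB show False by simp
    next
      case False
      have mq: "0 < m q" using q False by (simp add: a_def var_def)
      have eq: "a - var q = (m - var q) + var p"
        using mq False by (auto simp: a_def var_def)
      have "p_socle n B p (m - var q)"
      proof (rule socle_from[OF B p s mono_diff[OF mm]])
        show "m - var q + var p \<in> B" using d eq by simp
        show "\<forall>u\<in>mono n. u + (m - var q) \<in> B \<longrightarrow> u + m \<in> B"
        proof (intro ballI impI)
          fix u assume u: "u \<in> mono n" "u + (m - var q) \<in> B"
          show "u + m \<in> B"
            by (rule up_closed[OF B u(2) mono_add[OF u(1) mm]]) (auto simp: le_fun_def)
        qed
      qed
      with hyp qn mq show False by auto
    qed
  qed
  have noshift: "a + var (i + 1) - var i \<notin> B" if i: "1 \<le> i" "i < n" "0 < a i" for i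
  proof
    assume y: "a + var (i + 1) - var i \<in> B"
    show False
    proof (cases "i = p \<and> m p = 0")
      case True
      have "a + var (i + 1) - var i = var (p + 1) + m"
        using True by (auto simp: a_def var_def)
      moreover have "var (p + 1) \<in> mono n" using i True by (intro mono_var) auto
      ultimately show False using socle_iff[OF s, of "var (p+1)"] y by (auto simp: var_def)
    next
      case False
      have mi: "0 < m i" using False i(3) by (cases "i = p") (auto simp: a_def var_def)
      define m2 where "m2 = m + var (i + 1) - var i"
      have m2m: "m2 \<in> mono n" unfolding m2_def
        by (rule mono_diff, rule mono_add[OF mm mono_var]) (use i in auto)
      have eq: "a + var (i + 1) - var i = m2 + var p"
        using mi by (auto simp: a_def m2_def var_def)
      have "p_socle n B p m2"
      proof (rule socle_from[OF B p s m2m])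
        show "m2 + var p \<in> B" using y eq by simp
        show "\<forall>u\<in>mono n. u + m2 \<in> B \<longrightarrow> u + m \<in> B"
        proof (intro ballI impI)
          fix u assume u: "u \<in> mono n" "u + m2 \<in> B"
          have adm: "admissible_move n (u + m2) [(i, i + 1)]"
            using i by (auto simp: admissible_move_def le_fun_def m2_def var_def)
          have "borel_move (u + m2) [(i, i + 1)] = u + m"
            using mi by (auto simp: borel_move_def m2_def var_def)
          with move_closed[OF B u(2) adm] show "u + m \<in> B" by simp
        qed
      qed
      with hyp i mi show False unfolding m2_def by auto
    qed
  qed
  have "borel_ideal n (B - {a})"
    unfolding borel_ideal_def monomial_ideal_def
  proof (intro conjI ballI allI impI)
    show "B - {a} \<subseteq> mono n" using B_mono[OF B] by auto
  next
    fix x y assume x: "x \<in> B - {a}" and y: "y \<in> mono n" "x \<le> y"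
    have "y \<in> B" using up_closed[OF B _ y] x by auto
    moreover have "y \<noteq> a"
    proof
      assume ya: "y = a"
      obtain q where "x q \<noteq> a q" using x ya y by (metis DiffE ext insertI1)
      hence q: "x q < a q" using y ya by (metis le_funD order_le_neq_trans)
      have "x \<le> a - var q" using y ya q by (auto simp: le_fun_def var_def)
      hence "a - var q \<in> B" using up_closed[OF B _ mono_diff[OF am]] x by auto
      with nodiv[of q] q show False by simp
    qed
    ultimately show "y \<in> B - {a}" by simp
  next
    fix x ps assume x: "x \<in> B - {a}" and adm: "admissible_move n x ps"
    have "borel_move x ps \<in> B" using move_closed[OF B _ adm] x by auto
    moreover have "borel_move x ps \<noteq> a"
    proof
      assume mv: "borel_move x ps = a"
      have "ps \<noteq> []" using mv x by (auto simp: borel_move_def)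
      then obtain i j where ij: "(i, j) \<in> set ps" by (metis list.set_intros(1) surj_pair neq_Nil_conv)
      let ?I = "(\<Sum>(i, j)\<leftarrow>ps. var i) :: monom"
      let ?J = "(\<Sum>(i, j)\<leftarrow>ps. var j) :: monom"
      let ?R = "remove1 (i, j) ps"
      let ?IR = "(\<Sum>(i, j)\<leftarrow>?R. var i) :: monom"
      let ?JR = "(\<Sum>(i, j)\<leftarrow>?R. var j) :: monom"
      have rng: "\<forall>(i, j) \<in> set ps. 1 \<le> i \<and> i < j \<and> j \<le> n" and J: "?J \<le> x"
        using adm by (auto simp: admissible_move_def)
      have ijr: "1 \<le> i" "i < j" "j \<le> n" using rng ij by auto
      have Rsub: "set ?R \<subseteq> set ps" by (rule set_remove1_subset)
      have eI: "?I = var i + ?IR" using sum_remove1[OF ij, of "\<lambda>i j. var i"] by simp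
      have eJ: "?J = var j + ?JR" using sum_remove1[OF ij, of "\<lambda>i j. var j"] by simp
      have Jk: "\<And>k. var j k + ?JR k \<le> x k" using J eJ by (metis le_funD plus_fun_apply)
      have ak: "\<And>k. a k = x k + var i k + ?IR k - (var j k + ?JR k)"
        using mv eI eJ by (auto simp: borel_move_def)
      have ai: "0 < a i" using ak[of i] Jk[of i] by (simp add: var_def)
      have "a + var (i + 1) - var i \<in> B"
      proof (cases "i + 1 < j")
        case True
        let ?ps = "(i + 1, j) # ?R"
        have adm': "admissible_move n x ?ps"
          using True ijr rng Rsub J eJ by (auto simp: admissible_move_def)
        have "borel_move x ?ps = a + var (i + 1) - var i"
        proof (rule ext)
          fix k show "borel_move x ?ps k = (a + var (i + 1) - var i) k"
            using ak[of k] Jk[of k] by (auto simp: borel_move_def var_def)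
        qed
        then show ?thesis using move_closed[OF B _ adm'] x by auto
      next
        case False
        hence j: "j = i + 1" using ijr by simp
        have adm': "admissible_move n x ?R"
        proof -
          have "?JR \<le> x" using Jk by (auto simp: le_fun_def intro: le_trans[OF le_add2])
          then show ?thesis using rng Rsub by (auto simp: admissible_move_def)
        qed
        have "borel_move x ?R = a + var (i + 1) - var i"
        proof (rule ext)
          fix k show "borel_move x ?R k = (a + var (i + 1) - var i) k"
            using ak[of k] Jk[of k] j by (auto simp: borel_move_def var_def)
        qed
        then show ?thesis using move_closed[OF B _ adm'] x by auto
      qed
      with noshift[of i] ijr ai show False by simp
    qed
    ultimately show "borel_move x ps \<in> B - {a}" by simp
  qed
  hence "a \<in> G n B" using aB by (simp add: G_def)
  then show ?thesis using Bgens_eq[OF B] by (simp add: a_def)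
qed

end
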